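(* Let $p,q$ be odd primes with $q-p=2$, let $\varepsilon\in\{1,-1\}$, let $D=D_1\cdots D_n$ ($n\ge 0$) be a product of distinct odd primes with $\gcd(pq,D)=1$, and let $E_D/\mathbb{Q}$ be the elliptic curve $y^2=x(x+\varepsilon pD)(x+\varepsilon qD)$. For a prime $l$ let $\widetilde{E}_l$ be the reduction modulo $l$ of this equation and $a_l=l+1-\#\widetilde{E}_l(\mathbb{F}_l)$. Then: (1) if $3\nmid pqD$, then $\#\widetilde{E}_3(\mathbb{F}_3)=4$ and $a_3=0$; (2) if $7\nmid pqD$ and $p\equiv2,3,6\pmod7$, then $\#\widetilde{E}_7(\mathbb{F}_7)=8$ and $a_7=0$; (3) assume $5\nmid pqD$: (3a) if $p\equiv1,2\pmod5$, then $\#\widetilde{E}_5(\mathbb{F}_5)=4$, $a_5=2$ when $D\equiv1,4\pmod5$, and $\#\widetilde{E}_5(\mathbb{F}_5)=8$, $a_5=-2$ when $D\equiv2,3\pmod5$; (3b) if $p\equiv4\pmod5$, then $\#\widetilde{E}_5(\mathbb{F}_5)=8$, $a_5=-2$ when $D\equiv1,4\pmod5$, and $\#\widetilde{E}_5(\mathbb{F}_5)=4$, $a_5=2$ when $D\equiv2,3\pmod5$; (4) assume $7\nmid pqD$: (4a) if ($\varepsilon=1$ and $p\equiv1\pmod7$) or ($\varepsilon=-1$ and $p\equiv4\pmod7$), then $\#\widetilde{E}_7(\mathbb{F}_7)=12$, $a_7=-4$ when $D\equiv1,2,4\pmod7$, and $\#\widetilde{E}_7(\mathbb{F}_7)=4$,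 $a_7=4$ when $D\equiv3,5,6\pmod7$; (4b) if ($\varepsilon=1$ and $p\equiv4\pmod7$) or ($\varepsilon=-1$ and $p\equiv1\pmod7$), then $\#\widetilde{E}_7(\mathbb{F}_7)=4$, $a_7=4$ when $D\equiv1,2,4\pmod7$, and $\#\widetilde{E}_7(\mathbb{F}_7)=12$, $a_7=-4$ when $D\equiv3,5,6\pmod7$; (5) $\#\widetilde{E}_2(\mathbb{F}_2)=3$; $\#\widetilde{E}_{D_i}(\mathbb{F}_{D_i})=D_i+1$ for $i=1,\dots,n$; $\#\widetilde{E}_p(\mathbb{F}_p)=p$ if $(\frac{2\varepsilon D}{p})=1$ and $=p+2$ if $(\frac{2\varepsilon D}{p})=-1$; $\#\widetilde{E}_q(\mathbb{F}_q)=q$ if $(\frac{-2\varepsilon D}{q})=1$ and $=q+2$ if $(\frac{-2\varepsilon D}{q})=-1$.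
   Context: $\widetilde{E}_l$ denotes the projective plane cubic over $\mathbb{F}_l$ obtained by reducing the given Weierstrass equation modulo $l$; $\#\widetilde{E}_l(\mathbb{F}_l)$ counts all of its $\mathbb{F}_l$-points (including the point at infinity and, in the case of bad reduction, the singular point). $(\frac{\cdot}{\cdot})$ is the Legendre symbol. *)

theory Defs
  imports "HOL-Number_Theory.Number_Theory"
begin

text \<open>Number of F_l-points of the projective cubic y^2 z = x (x + a z)(x + b z)
  reduced mod l: affine solutions over {0..l-1}^2 plus the unique point at
  infinity [0:1:0]. Singular points (bad reduction) are included.\<close>
definition npts :: "int \<Rightarrow> int \<Rightarrow> nat \<Rightarrow> nat" where
  "npts a b l = card {(x :: int, y :: int). x \<in> {0..<int l} \<and> y \<in> {0..<int l} \<and>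
       [y^2 = x * (x + a) * (x + b)] (mod int l)} + 1"

definition trace_al :: "int \<Rightarrow> int \<Rightarrow> nat \<Rightarrow> int" where
  "trace_al a b l = int l + 1 - int (npts a b l)"

end

theory Submission
  imports Defs
begin

lemma npts_list:
  "npts a b l = length (filter (\<lambda>(x,y). (y^2 - x*(x+a)*(x+b)) mod int l = 0)
      (List.product [0..int l - 1] [0..int l - 1])) + 1"
proof -
  let ?xs = "filter (\<lambda>(x,y). (y^2 - x*(x+a)*(x+b)) mod int l = 0)
      (List.product [0..int l - 1] [0..int l - 1])"
  have e: "{(x :: int, y :: int). x \<in> {0..<int l} \<and> y \<in> {0..<int l} \<and>
       [y^2 = x * (x + a) * (x + b)] (mod int l)} = set ?xs"
    by (auto simp: cong_iff_dvd_diff dvd_eq_mod_eq_0)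
  have "distinct ?xs"
    by (simp add: distinct_product)
  then have "card (set ?xs) = length ?xs" by (rule distinct_card)
  then show ?thesis unfolding npts_def e by simp
qed

lemma npts_mod: "npts a b l = npts (a mod int l) (b mod int l) l"
proof -
  have c: "\<And>x. [x * (x + a) * (x + b) = x * (x + a mod int l) * (x + b mod int l)] (mod int l)"
    by (intro cong_mult cong_add cong_refl) (simp_all add: cong_def)
  have "\<And>x y. [y^2 = x * (x + a) * (x + b)] (mod int l) = [y^2 = x * (x + a mod int l) * (x + b mod int l)] (mod int l)"
    using c cong_trans cong_sym by meson
  then show ?thesis unfolding npts_def by simp
qed

definition nptsl :: "int \<Rightarrow> int \<Rightarrow> nat \<Rightarrow> nat" where
 "nptsl a b l = length (filter (\<lambda>(x,y). (y^2 - x*(x+a)*(x+b)) mod int l = 0)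
      (List.product [0..int l - 1] [0..int l - 1])) + 1"


lemma copr: "prime (P::int) \<Longrightarrow> \<not> [x = 0] (mod P) \<Longrightarrow> coprime x P"
  by (metis cong_0_iff coprime_commute prime_imp_coprime)

lemma count_main:
  fixes l :: nat and a b c :: int
  assumes pl: "prime l" and ha: "[a = 0] (mod int l)" and hb: "[b = c] (mod int l)"
  shows "npts a b l = 2 + card {t \<in> {0..<int l}. \<not> [t^2 = c] (mod int l)}"
proof -
  define P where "P = int l"
  have pP: "prime P" using pl P_def by simp
  have P1: "P > 1" using pP prime_gt_1_int by blast
  define T where "T = {t \<in> {0..<P}. \<not> [t^2 = c] (mod P)}"
  define f where "f t = ((t^2 - c) mod P, (t*(t^2 - c)) mod P)" for t
  define S where "S = {(x :: int, y :: int). x \<in> {0..<P} \<and> y \<in> {0..<P} \<and>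
       [y^2 = x * (x + a) * (x + b)] (mod P)}"
  have eqv: "[y^2 = x*(x+a)*(x+b)] (mod P) \<longleftrightarrow> [y^2 = x*x*(x+c)] (mod P)" for x y
  proof -
    have "[x*(x+a)*(x+b) = x*(x+0)*(x+c)] (mod P)"
      using ha hb P_def by (intro cong_mult cong_add cong_refl) auto
    then show ?thesis by (auto intro: cong_trans cong_sym)
  qed
  have fT: "f ` T \<subseteq> S"
  proof
    fix z assume "z \<in> f ` T"
    then obtain t where t: "t \<in> T" "z = f t" by auto
    define X where "X = t^2 - c"
    have "[((t*X) mod P)^2 = (t*X)^2] (mod P)"
      by (intro cong_pow) simp
    moreover have "[(X mod P) * (X mod P) * (X mod P + c) = X*X*(X+c)] (mod P)"
      by (intro cong_mult cong_add) auto
    moreover have "(t*X)^2 = X*X*(X+c)" unfolding X_def by (simp add: power2_eq_square algebra_simps)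
    ultimately have "[((t*X) mod P)^2 = (X mod P) * (X mod P) * (X mod P + c)] (mod P)"
      by (metis cong_sym cong_trans)
    then show "z \<in> S" using t P1 unfolding S_def f_def X_def by (simp add: eqv)
  qed
  have S0: "(0,0) \<in> S" unfolding S_def using P1 by auto
  have nf: "(0,0) \<notin> f ` T"
  proof
    assume "(0,0) \<in> f ` T"
    then obtain t where "t \<in> T" "(t^2 - c) mod P = 0" unfolding f_def by auto
    then show False unfolding T_def by (simp add: cong_iff_dvd_diff dvd_eq_mod_eq_0)
  qed
  have inj: "inj_on f T"
  proof
    fix s t assume st: "s \<in> T" "t \<in> T" "f s = f t"
    then have e1: "[s^2 - c = t^2 - c] (mod P)" and e2: "[s*(s^2-c) = t*(t^2-c)] (mod P)"
      unfolding f_def cong_def by auto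
    have nz: "\<not> [t^2 - c = 0] (mod P)" using st unfolding T_def
      by (simp add: cong_iff_dvd_diff)
    have "[s*(s^2-c) = s*(t^2-c)] (mod P)" using e1 by (intro cong_mult cong_refl)
    then have "[s*(t^2-c) = t*(t^2-c)] (mod P)" using e2 by (metis cong_sym cong_trans)
    then have "[s = t] (mod P)" using cong_mult_rcancel[OF copr[OF pP nz]] by blast
    then show "s = t" using st unfolding T_def by (auto intro: cong_less_imp_eq_int)
  qed
  have Ssub: "S \<subseteq> insert (0,0) (f ` T)"
  proof
    fix z assume z: "z \<in> S"
    then obtain x y where xy: "z = (x,y)" "0 \<le> x" "x < P" "0 \<le> y" "y < P"
        "[y^2 = x*x*(x+c)] (mod P)"
      unfolding S_def by (auto simp: eqv)
    show "z \<in> insert (0,0) (f ` T)"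
    proof (cases "x = 0")
      case True
      then have "P dvd y^2" using xy by (simp add: cong_0_iff)
      then have "P dvd y" using pP prime_dvd_power by blast
      then have "y = 0" using xy by (metis zdvd_not_zless not_le order.order_iff_strict)
      then show ?thesis using True xy by simp
    next
      case False
      then have nx: "\<not> [x = 0] (mod P)" using xy
        by (metis cong_less_imp_eq_int order_refl P1 less_trans zero_less_one)
      obtain u where u: "[x*u = 1] (mod P)" using cong_solve_coprime_int[OF copr[OF pP nx]] by blast
      define t where "t = (y*u) mod P"
      have tx: "[t*x = y] (mod P)"
      proof -
        have "[t*x = (y*u)*x] (mod P)" unfolding t_def by (intro cong_mult) auto
        moreover have "[(y*u)*x = y*1] (mod P)" using u
          by (metis cong_scalar_left mult.assoc mult.commute)
        ultimately show ?thesis by (metis cong_trans mult_1_right)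
      qed
      have "[(t*x)^2 = x*x*(x+c)] (mod P)" using tx xy(6)
        by (metis cong_pow cong_trans)
      then have "[(x*x)*t^2 = (x*x)*(x+c)] (mod P)" by (simp add: power2_eq_square algebra_simps)
      moreover have "coprime (x*x) P" using copr[OF pP nx] by simp
      ultimately have tq: "[t^2 = x + c] (mod P)" using cong_mult_lcancel by blast
      then have tq2: "[t^2 - c = x] (mod P)"
        by (metis add_diff_cancel_right' cong_diff cong_refl)
      have tT: "t \<in> T"
      proof -
        have "\<not> [t^2 = c] (mod P)"
        proof
          assume "[t^2 = c] (mod P)"
          then have "[x + c = 0 + c] (mod P)" using tq by (metis cong_sym cong_trans add_0)
          then show False using nx by (simp add: cong_iff_dvd_diff)
        qed
        then show ?thesis unfolding T_def t_def using P1 by simp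
      qed
      have "(t^2 - c) mod P = x" using tq2 xy by (simp add: cong_def)
      moreover have "(t*(t^2-c)) mod P = y"
      proof -
        have "[t*(t^2-c) = t*x] (mod P)" using tq2 by (intro cong_mult cong_refl)
        then have "[t*(t^2-c) = y] (mod P)" using tx by (metis cong_trans)
        then show ?thesis using xy by (simp add: cong_def)
      qed
      ultimately show ?thesis using tT xy unfolding f_def by force
    qed
  qed
  have "S = insert (0,0) (f ` T)" using Ssub fT S0 by blast
  moreover have "finite T" unfolding T_def by (rule finite_subset[of _ "{0..<P}"]) auto
  ultimately have "card S = Suc (card T)"
    using nf inj by (simp add: card_image)
  then show ?thesis unfolding npts_def S_def T_def P_def by simp
qed


lemma card_nonroots:
  fixes P c :: int assumes "P > 0"
  shows "card {t \<in> {0..<P}. \<not> [t^2 = c] (mod P)} = nat P - card {t \<in> {0..<P}. [t^2 = c] (mod P)}"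
proof -
  have "{t \<in> {0..<P}. \<not> [t^2 = c] (mod P)} = {0..<P} - {t \<in> {0..<P}. [t^2 = c] (mod P)}" by auto
  moreover have "card ({0..<P} - {t \<in> {0..<P}. [t^2 = c] (mod P)}) = card {0..<P} - card {t \<in> {0..<P}. [t^2 = c] (mod P)}"
    by (rule card_Diff_subset) (auto intro: finite_subset[of _ "{0..<P}"])
  ultimately show ?thesis by simp
qed

lemma roots0:
  fixes l :: nat and c :: int
  assumes pl: "prime l" and hc: "[c = 0] (mod int l)"
  shows "card {t \<in> {0..<int l}. \<not> [t^2 = c] (mod int l)} = l - 1"
proof -
  define P where "P = int l"
  have pP: "prime P" using pl P_def by simp
  have P1: "P > 1" using pP prime_gt_1_int by blast
  have "{t \<in> {0..<P}. [t^2 = c] (mod P)} = {0}"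
  proof (intro equalityI subsetI)
    fix t assume t: "t \<in> {t \<in> {0..<P}. [t^2 = c] (mod P)}"
    then have "[t^2 = 0] (mod P)" using hc P_def by (metis (mono_tags) cong_trans mem_Collect_eq)
    then have "P dvd t" using pP prime_dvd_power by (auto simp: cong_0_iff)
    then show "t \<in> {0}" using t by (metis atLeastLessThan_iff insertCI mem_Collect_eq zdvd_not_zless order.order_iff_strict)
  next
    fix t assume "t \<in> {0::int}" then show "t \<in> {t \<in> {0..<P}. [t^2 = c] (mod P)}"
      using P1 hc P_def by (auto intro: cong_sym)
  qed
  then show ?thesis using card_nonroots[of P c] P1 P_def by simp
qed

lemma rootsN:
  fixes l :: nat and c :: int
  assumes "Legendre c (int l) = -1" "l > 0"
  shows "card {t \<in> {0..<int l}. \<not> [t^2 = c] (mod int l)} = l"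
proof -
  have "\<not> QuadRes (int l) c" using assms(1) unfolding Legendre_def by (auto split: if_splits)
  then have "{t \<in> {0..<int l}. [t^2 = c] (mod int l)} = {}" unfolding QuadRes_def by auto
  then have "card {t \<in> {0..<int l}. [t^2 = c] (mod int l)} = 0" by (simp only: card.empty)
  then show ?thesis using card_nonroots[of "int l" c] assms(2) by simp
qed

lemma rootsQ:
  fixes l :: nat and c :: int
  assumes pl: "prime l" and ol: "odd l" and hc: "Legendre c (int l) = 1"
  shows "card {t \<in> {0..<int l}. \<not> [t^2 = c] (mod int l)} = l - 2"
proof -
  define P where "P = int l"
  have pP: "prime P" using pl P_def by simp
  have P1: "P > 1" using pP prime_gt_1_int by blast
  have oP: "odd P" using ol P_def by simp
  have nc: "\<not> [c = 0] (mod P)" and "QuadRes P c" using hc P_def unfolding Legendre_def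
    by (auto split: if_splits)
  then obtain y where y: "[y^2 = c] (mod P)" unfolding QuadRes_def by blast
  define t0 where "t0 = y mod P"
  have t0r: "0 \<le> t0" "t0 < P" unfolding t0_def using P1 by auto
  have t0c: "[t0^2 = c] (mod P)"
  proof -
    have "[t0 = y] (mod P)" by (simp add: t0_def)
    then have "[t0^2 = y^2] (mod P)" by (rule cong_pow)
    then show ?thesis using y by (metis cong_trans)
  qed
  have t0nz: "t0 \<noteq> 0"
  proof
    assume "t0 = 0" then have "[c = 0] (mod P)" using t0c by (simp add: cong_sym_eq power2_eq_square)
    then show False using nc by simp
  qed
  have ne: "t0 \<noteq> P - t0" using oP by (metis add_diff_cancel_left' diff_add_cancel even_add)
  have "{t \<in> {0..<P}. [t^2 = c] (mod P)} = {t0, P - t0}"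
  proof (intro equalityI subsetI)
    fix t assume t: "t \<in> {t \<in> {0..<P}. [t^2 = c] (mod P)}"
    then have "[t^2 = t0^2] (mod P)" using t0c cong_trans[OF _ cong_sym[OF t0c]] by simp
    then have "P dvd (t - t0) * (t + t0)" by (simp add: cong_iff_dvd_diff power2_eq_square algebra_simps)
    then have "P dvd (t - t0) \<or> P dvd (t + t0)" using pP prime_dvd_mult_iff by blast
    then show "t \<in> {t0, P - t0}"
    proof
      assume "P dvd t - t0"
      then have "[t = t0] (mod P)" by (simp add: cong_iff_dvd_diff)
      then show ?thesis using cong_less_imp_eq_int[of t P t0] t t0r by simp
    next
      assume d: "P dvd t + t0"
      have "0 < t + t0" "t + t0 < 2 * P" using t t0r t0nz by auto
      obtain k where k: "t + t0 = P * k" using d by blast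
      have "0 < k" using k \<open>0 < t + t0\<close> P1 by (simp add: zero_less_mult_iff)
      moreover have "k < 2"
      proof -
        have "P * k < P * 2" using k \<open>t + t0 < 2 * P\<close> by (simp add: mult.commute)
        then show ?thesis using P1 mult_less_cancel_left_pos[of P k 2] by simp
      qed
      ultimately have "k = 1" by simp
      then have "t + t0 = P" using k by simp
      then show ?thesis by auto
    qed
  next
    fix t assume "t \<in> {t0, P - t0}"
    moreover have "[(P - t0)^2 = c] (mod P)"
    proof -
      have "(P - t0)^2 = t0^2 + P * (P - 2*t0)" by (simp add: power2_eq_square algebra_simps)
      then have "[(P - t0)^2 = t0^2] (mod P)" by (simp add: cong_iff_dvd_diff)
      then show ?thesis using t0c by (rule cong_trans)
    qed
    ultimately show "t \<in> {t \<in> {0..<P}. [t^2 = c] (mod P)}" using t0r t0c t0nz by auto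
  qed
  then have "card {t \<in> {0..<P}. [t^2 = c] (mod P)} = 2" using ne by simp
  then show ?thesis using card_nonroots[of P c] P1 P_def by simp
qed

lemma npts_nptsl: "npts a b l = nptsl a b l" unfolding nptsl_def by (rule npts_list)

definition F :: "nat \<Rightarrow> int \<Rightarrow> nat \<Rightarrow> nat \<Rightarrow> nat" where
  "F l e i j = nptsl ((e*int i*int j) mod int l) ((e*int((i+2) mod l)*int j) mod int l) l"

lemma red:
  assumes "l > 0"
  shows "npts (e * int p * int D) (e * int (p+2) * int D) l = F l e (p mod l) (D mod l)"
proof -
  have c1: "[int (p mod l) = int p] (mod int l)" and c2: "[int (D mod l) = int D] (mod int l)"
    and c3: "[int ((p mod l + 2) mod l) = int (p + 2)] (mod int l)"
    by (simp_all add: cong_def of_nat_mod mod_add_left_eq mod_add_right_eq)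
  have "[e*int (p mod l)*int (D mod l) = e * int p * int D] (mod int l)"
    using c1 c2 by (intro cong_mult cong_refl)
  then have a: "(e*int (p mod l)*int (D mod l)) mod int l = (e * int p * int D) mod int l"
    by (simp add: cong_def)
  have "[e*int ((p mod l + 2) mod l)*int (D mod l) = e * int (p+2) * int D] (mod int l)"
    using c3 c2 by (intro cong_mult cong_refl)
  then have b: "(e*int ((p mod l + 2) mod l)*int (D mod l)) mod int l = (e * int (p+2) * int D) mod int l"
    by (simp add: cong_def)
  show ?thesis unfolding F_def a b npts_nptsl[symmetric] by (rule npts_mod)
qed

lemma ndvd: "\<not> l dvd p * (p+2) * D \<Longrightarrow> p mod l \<noteq> 0 \<and> (p mod l + 2) mod l \<noteq> 0 \<and> D mod l \<noteq> 0"
  for l p D :: nat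
  by (metis dvd_imp_mod_0 dvd_mult dvd_mult2 mod_0_imp_dvd mod_add_left_eq)

lemma tab3: "\<forall>e\<in>{1,-1::int}. \<forall>i\<in>{2::nat}. \<forall>j\<in>{1,2::nat}. F 3 e i j = 4"
  unfolding F_def nptsl_def by code_simp
lemma tab7a: "\<forall>e\<in>{1,-1::int}. \<forall>i\<in>{2,3,6::nat}. \<forall>j\<in>{1,2,3,4,5,6::nat}. F 7 e i j = 8"
  unfolding F_def nptsl_def by code_simp
lemma tab5a: "\<forall>e\<in>{1,-1::int}. \<forall>i\<in>{1,2::nat}. (\<forall>j\<in>{1,4::nat}. F 5 e i j = 4) \<and> (\<forall>j\<in>{2,3::nat}. F 5 e i j = 8)"
  unfolding F_def nptsl_def by code_simp
lemma tab5b: "\<forall>e\<in>{1,-1::int}. \<forall>i\<in>{4::nat}. (\<forall>j\<in>{1,4::nat}. F 5 e i j = 8) \<and> (\<forall>j\<in>{2,3::nat}. F 5 e i j = 4)"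
  unfolding F_def nptsl_def by code_simp
lemma tab7b: "\<forall>(e,i)\<in>{(1::int,1::nat),(-1,4)}. (\<forall>j\<in>{1,2,4::nat}. F 7 e i j = 12) \<and> (\<forall>j\<in>{3,5,6::nat}. F 7 e i j = 4)"
  unfolding F_def nptsl_def by code_simp
lemma tab7c: "\<forall>(e,i)\<in>{(1::int,4::nat),(-1,1)}. (\<forall>j\<in>{1,2,4::nat}. F 7 e i j = 4) \<and> (\<forall>j\<in>{3,5,6::nat}. F 7 e i j = 12)"
  unfolding F_def nptsl_def by code_simp
lemma tab2: "\<forall>e\<in>{1,-1::int}. F 2 e 1 1 = 3"
  unfolding F_def nptsl_def by code_simp

lemma npts_sym: "npts a b l = npts b a l"
  unfolding npts_def by (simp add: mult.assoc mult.commute mult.left_commute)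

lemma odd_prod: "\<forall>r\<in>set Ds. odd r \<Longrightarrow> odd (prod_list Ds)" for Ds :: "nat list"
  by (induction Ds) auto

theorem lemma2p3:
  fixes p q :: nat and \<epsilon> :: int and Ds :: "nat list" and D :: nat
  assumes "prime p" "prime q" "odd p" "odd q" "q = p + 2"
    and "\<epsilon> \<in> {1, -1}"
    and "distinct Ds" "\<forall>r\<in>set Ds. prime r \<and> odd r" "D = prod_list Ds"
    and "gcd (p * q) D = 1"
  defines "A \<equiv> \<epsilon> * int p * int D" and "B \<equiv> \<epsilon> * int q * int D"
  shows
   "(\<not> 3 dvd p * q * D \<longrightarrow> npts A B 3 = 4 \<and> trace_al A B 3 = 0)
  \<and> (\<not> 7 dvd p * q * D \<and> p mod 7 \<in> {2, 3, 6} \<longrightarrow> npts A B 7 = 8 \<and> trace_al A B 7 = 0)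
  \<and> (\<not> 5 dvd p * q * D \<longrightarrow>
       (p mod 5 \<in> {1, 2} \<longrightarrow>
          (D mod 5 \<in> {1, 4} \<longrightarrow> npts A B 5 = 4 \<and> trace_al A B 5 = 2)
        \<and> (D mod 5 \<in> {2, 3} \<longrightarrow> npts A B 5 = 8 \<and> trace_al A B 5 = -2))
     \<and> (p mod 5 = 4 \<longrightarrow>
          (D mod 5 \<in> {1, 4} \<longrightarrow> npts A B 5 = 8 \<and> trace_al A B 5 = -2)
        \<and> (D mod 5 \<in> {2, 3} \<longrightarrow> npts A B 5 = 4 \<and> trace_al A B 5 = 2)))
  \<and> (\<not> 7 dvd p * q * D \<longrightarrow>
       ((\<epsilon> = 1 \<and> p mod 7 = 1) \<or> (\<epsilon> = -1 \<and> p mod 7 = 4) \<longrightarrow>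
          (D mod 7 \<in> {1, 2, 4} \<longrightarrow> npts A B 7 = 12 \<and> trace_al A B 7 = -4)
        \<and> (D mod 7 \<in> {3, 5, 6} \<longrightarrow> npts A B 7 = 4 \<and> trace_al A B 7 = 4))
     \<and> ((\<epsilon> = 1 \<and> p mod 7 = 4) \<or> (\<epsilon> = -1 \<and> p mod 7 = 1) \<longrightarrow>
          (D mod 7 \<in> {1, 2, 4} \<longrightarrow> npts A B 7 = 4 \<and> trace_al A B 7 = 4)
        \<and> (D mod 7 \<in> {3, 5, 6} \<longrightarrow> npts A B 7 = 12 \<and> trace_al A B 7 = -4)))
  \<and> (npts A B 2 = 3
     \<and> (\<forall>r\<in>set Ds. npts A B r = r + 1)
     \<and> (Legendre (2 * \<epsilon> * int D) (int p) = 1 \<longrightarrow> npts A B p = p)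
     \<and> (Legendre (2 * \<epsilon> * int D) (int p) = -1 \<longrightarrow> npts A B p = p + 2)
     \<and> (Legendre (-2 * \<epsilon> * int D) (int q) = 1 \<longrightarrow> npts A B q = q)
     \<and> (Legendre (-2 * \<epsilon> * int D) (int q) = -1 \<longrightarrow> npts A B q = q + 2))"
  proof -
  have e: "\<epsilon> = 1 \<or> \<epsilon> = -1" using assms(6) by auto
  have BB: "B = \<epsilon> * int (p+2) * int D" unfolding B_def using assms(5) by simp
  have red': "\<And>l. l > 0 \<Longrightarrow> npts A B l = F l \<epsilon> (p mod l) (D mod l)"
    unfolding A_def BB by (rule red)
  have tr: "\<And>l. trace_al A B l = int l + 1 - int (npts A B l)" by (simp add: trace_al_def)
  have pq: "p * q * D = p * (p+2) * D" using assms(5) by simp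
  have P1: "\<not> 3 dvd p * q * D \<longrightarrow> npts A B 3 = 4 \<and> trace_al A B 3 = 0"
  proof
    assume "\<not> 3 dvd p * q * D"
    then have h: "p mod 3 \<noteq> 0 \<and> (p mod 3 + 2) mod 3 \<noteq> 0 \<and> D mod 3 \<noteq> 0" using ndvd pq by metis
    have "p mod 3 = 2" using h by presburger
    moreover have "D mod 3 = 1 \<or> D mod 3 = 2" using h by presburger
    ultimately have "p mod 3 \<in> {2}" "D mod 3 \<in> {1,2}" by auto
    then have "npts A B 3 = 4" using red'[of 3] tab3 assms(6) by auto
    then show "npts A B 3 = 4 \<and> trace_al A B 3 = 0" by (simp add: tr)
  qed
  have P2: "\<not> 7 dvd p * q * D \<and> p mod 7 \<in> {2, 3, 6} \<longrightarrow> npts A B 7 = 8 \<and> trace_al A B 7 = 0"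
  proof
    assume a: "\<not> 7 dvd p * q * D \<and> p mod 7 \<in> {2, 3, 6}"
    then have h: "D mod 7 \<noteq> 0" using ndvd pq by metis
    then have "D mod 7 = 1 \<or> D mod 7 = 2 \<or> D mod 7 = 3 \<or> D mod 7 = 4 \<or> D mod 7 = 5 \<or> D mod 7 = 6" by presburger
    then have "D mod 7 \<in> {1,2,3,4,5,6}" by auto
    then have "npts A B 7 = 8" using a red'[of 7] tab7a assms(6) by auto
    then show "npts A B 7 = 8 \<and> trace_al A B 7 = 0" by (simp add: tr)
  qed
  have P3: "\<not> 5 dvd p * q * D \<longrightarrow>
       (p mod 5 \<in> {1, 2} \<longrightarrow>
          (D mod 5 \<in> {1, 4} \<longrightarrow> npts A B 5 = 4 \<and> trace_al A B 5 = 2)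
        \<and> (D mod 5 \<in> {2, 3} \<longrightarrow> npts A B 5 = 8 \<and> trace_al A B 5 = -2))
     \<and> (p mod 5 = 4 \<longrightarrow>
          (D mod 5 \<in> {1, 4} \<longrightarrow> npts A B 5 = 8 \<and> trace_al A B 5 = -2)
        \<and> (D mod 5 \<in> {2, 3} \<longrightarrow> npts A B 5 = 4 \<and> trace_al A B 5 = 2))"
    using red'[of 5] tab5a tab5b assms(6) by (auto simp: tr)
  have P4: "\<not> 7 dvd p * q * D \<longrightarrow>
       ((\<epsilon> = 1 \<and> p mod 7 = 1) \<or> (\<epsilon> = -1 \<and> p mod 7 = 4) \<longrightarrow>
          (D mod 7 \<in> {1, 2, 4} \<longrightarrow> npts A B 7 = 12 \<and> trace_al A B 7 = -4)
        \<and> (D mod 7 \<in> {3, 5, 6} \<longrightarrow> npts A B 7 = 4 \<and> trace_al A B 7 = 4))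
     \<and> ((\<epsilon> = 1 \<and> p mod 7 = 4) \<or> (\<epsilon> = -1 \<and> p mod 7 = 1) \<longrightarrow>
          (D mod 7 \<in> {1, 2, 4} \<longrightarrow> npts A B 7 = 4 \<and> trace_al A B 7 = 4)
        \<and> (D mod 7 \<in> {3, 5, 6} \<longrightarrow> npts A B 7 = 12 \<and> trace_al A B 7 = -4))"
    using red'[of 7] tab7b tab7c by (auto simp: tr)
  have p2: "p \<ge> 2" "q \<ge> 2" using assms(1,2) prime_ge_2_nat by auto
  have oD: "odd D" using odd_prod assms(8,9) by blast
  have P5a: "npts A B 2 = 3"
  proof -
    have "p mod 2 = 1" "D mod 2 = 1" using assms(3) oD by presburger+
    then show ?thesis using red'[of 2] tab2 e by auto
  qed
  have P5b: "\<forall>r\<in>set Ds. npts A B r = r + 1"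
  proof
    fix r assume r: "r \<in> set Ds"
    then have pr: "prime r" using assms(8) by blast
    have "r dvd D" using r assms(9) prod_list_dvd by blast
    then have d: "int r dvd int D" by simp
    have a: "[A = 0] (mod int r)" unfolding A_def cong_0_iff using d by simp
    have b: "[B = 0] (mod int r)" unfolding B_def cong_0_iff using d by simp
    have "npts A B r = 2 + (r - 1)" using count_main[OF pr a b] roots0[OF pr cong_refl] by simp
    then show "npts A B r = r + 1" using prime_ge_2_nat[OF pr] by simp
  qed
  have P5p: "(Legendre (2 * \<epsilon> * int D) (int p) = 1 \<longrightarrow> npts A B p = p)
     \<and> (Legendre (2 * \<epsilon> * int D) (int p) = -1 \<longrightarrow> npts A B p = p + 2)"
  proof -
    have a: "[A = 0] (mod int p)" unfolding A_def cong_0_iff by simp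
    have "B - 2 * \<epsilon> * int D = int p * (\<epsilon> * int D)" unfolding BB by (simp add: algebra_simps)
    then have b: "[B = 2 * \<epsilon> * int D] (mod int p)" unfolding cong_iff_dvd_diff by simp
    note cm = count_main[OF assms(1) a b]
    show ?thesis using cm rootsQ[OF assms(1) assms(3)] rootsN[of _ p] p2 by auto
  qed
  have P5q: "(Legendre (-2 * \<epsilon> * int D) (int q) = 1 \<longrightarrow> npts A B q = q)
     \<and> (Legendre (-2 * \<epsilon> * int D) (int q) = -1 \<longrightarrow> npts A B q = q + 2)"
  proof -
    have b: "[B = 0] (mod int q)" unfolding B_def cong_0_iff by simp
    have "A - (-2 * \<epsilon> * int D) = int q * (\<epsilon> * int D)" unfolding A_def using assms(5) by (simp add: algebra_simps)
    then have a: "[A = -2 * \<epsilon> * int D] (mod int q)" unfolding cong_iff_dvd_diff by simp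
    note cm = count_main[OF assms(2) b a]
    show ?thesis using cm npts_sym[of A B q] rootsQ[OF assms(2) assms(4)] rootsN[of _ q] p2 by auto
  qed
  show ?thesis using P1 P2 P3 P4 P5a P5b P5p P5q by blast
qed

end
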